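(* Let $\sigma:[0,\infty)\to[0,\infty)$ be nondecreasing with $\lim_{t\to\infty}\sigma(t)=\infty$. Then $\alpha(\sigma)=\frac{1}{\gamma(\sigma)}$, where, since $\gamma(\sigma),\alpha(\sigma)\in[0,\infty]$, for the extreme values this means that $\gamma(\sigma)=\infty$ if and only if $\alpha(\sigma)=0$, and $\gamma(\sigma)=0$ if and only if $\alpha(\sigma)=\infty$.
   Context: For a measurable positive function $f$ on some $[A,\infty)$, its upper Matuszewska index is $\alpha(f):=\inf\{\alpha\in\mathbb{R}:\exists C_\alpha>0\ \forall\Lambda>1,\ \limsup_{x\to\infty}\sup_{\lambda\in[1,\Lambda]}\frac{f(\lambda x)}{\lambda^{\alpha}f(x)}\le C_\alpha\}$ (with $\inf\emptyset=\infty$); for $\sigma$ as in the claim, $\alpha(\sigma)$ means the index of the restriction of $\sigma$ to any $[A,\infty)$ with $A>0$ on which $\sigma>0$ (independent of $A$). For $\gamma>0$, say $(P_{\sigma,\gamma})$ holds if there is $K>1$ with $\limsup_{t\to\infty}\sigma(K^{\gamma}t)/\sigma(t)<K$; $\gamma(\sigma):=\sup\{\gamma>0:(P_{\sigma,\gamma})\text{ holds}\}$, and $\gamma(\sigma):=0$ if no $(P_{\sigma,\gamma})$ holds. *)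

theory Defs
  imports "HOL-Analysis.Analysis"
begin

text \<open>Upper Matuszewska index (values in the extended reals; Inf of the empty set is \<infinity>).
  Only the behaviour of f at infinity matters (limsup as x tends to infinity).\<close>
definition upper_matuszewska :: "(real \<Rightarrow> real) \<Rightarrow> ereal" where
  "upper_matuszewska f = Inf (ereal ` {a. \<exists>C>0. \<forall>\<Lambda>>1.
      Limsup at_top (\<lambda>x. SUP l\<in>{1..\<Lambda>}. ereal (f (l * x) / (l powr a * f x))) \<le> ereal C})"

definition P_prop :: "(real \<Rightarrow> real) \<Rightarrow> real \<Rightarrow> bool" where
  "P_prop \<sigma> \<gamma> \<longleftrightarrow> (\<exists>K>1. Limsup at_top (\<lambda>t. ereal (\<sigma> (K powr \<gamma> * t) / \<sigma> t)) < ereal K)"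

definition gamma_index :: "(real \<Rightarrow> real) \<Rightarrow> ereal" where
  "gamma_index \<sigma> = (if \<exists>\<gamma>>0. P_prop \<sigma> \<gamma>
      then Sup (ereal ` {\<gamma>. \<gamma> > 0 \<and> P_prop \<sigma> \<gamma>}) else 0)"

end

theory Submission imports Defs begin

definition matset :: "(real \<Rightarrow> real) \<Rightarrow> real set" where
  "matset \<sigma> = {a. \<exists>C>0. \<forall>\<Lambda>>1. Limsup at_top (\<lambda>x. SUP l\<in>{1..\<Lambda>}. ereal (\<sigma> (l * x) / (l powr a * \<sigma> x))) \<le> ereal C}"

lemma ev_pos:
  fixes \<sigma> :: "real \<Rightarrow> real"
  assumes lim: "filterlim \<sigma> at_top at_top"
  shows "eventually (\<lambda>x. x \<ge> 0 \<and> \<sigma> x > 0) at_top"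
proof -
  have "eventually (\<lambda>x. \<sigma> x > 0) at_top" using lim unfolding filterlim_at_top_dense by auto
  moreover have "eventually (\<lambda>x::real. x \<ge> 0) at_top" by (rule eventually_ge_at_top)
  ultimately show ?thesis by eventually_elim auto
qed

lemma L0:
  fixes \<sigma> :: "real \<Rightarrow> real"
  assumes mono: "mono_on {0..} \<sigma>"
    and lim: "filterlim \<sigma> at_top at_top"
    and H: "a \<in> matset \<sigma>"
  shows "a \<ge> 0"
proof (rule ccontr)
  assume "\<not> a \<ge> 0" hence a: "a < 0" by simp
  obtain C where C: "C > 0" and HC: "\<forall>\<Lambda>>1. Limsup at_top (\<lambda>x. SUP l\<in>{1..\<Lambda>}. ereal (\<sigma> (l * x) / (l powr a * \<sigma> x))) \<le> ereal C"
    using H unfolding matset_def by blast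
  define \<Lambda> where "\<Lambda> = (C+2) powr (-1/a)"
  have L1: "\<Lambda> > 1" unfolding \<Lambda>_def using C a by (intro gr_one_powr) (auto simp: field_simps)
  have Lp: "\<Lambda> powr a = 1/(C+2)"
  proof -
    have "\<Lambda> powr a = (C+2) powr (-1/a * a)" unfolding \<Lambda>_def by (simp add: powr_powr)
    also have "-1/a * a = -1" using a by simp
    finally show ?thesis using C by (simp add: powr_minus_divide)
  qed
  have "eventually (\<lambda>x. ereal (C+2) \<le> (SUP l\<in>{1..\<Lambda>}. ereal (\<sigma> (l * x) / (l powr a * \<sigma> x)))) at_top"
    using ev_pos[OF lim]
  proof eventually_elim
    case (elim x)
    have "\<sigma> x \<le> \<sigma> (\<Lambda> * x)" using elim L1
      by (intro mono_onD[OF mono]) (auto simp: mult_le_cancel_right1)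
    hence "(C+2) * \<sigma> x \<le> (C+2) * \<sigma> (\<Lambda> * x)" using C by (intro mult_left_mono) auto
    hence "C + 2 \<le> \<sigma> (\<Lambda> * x) / (\<Lambda> powr a * \<sigma> x)" using elim C
      by (simp add: Lp field_simps)
    also have "ereal \<dots> \<le> (SUP l\<in>{1..\<Lambda>}. ereal (\<sigma> (l * x) / (l powr a * \<sigma> x)))"
      using L1 by (intro SUP_upper) auto
    finally show ?case by simp
  qed
  hence "ereal (C+2) \<le> Limsup at_top (\<lambda>x. SUP l\<in>{1..\<Lambda>}. ereal (\<sigma> (l * x) / (l powr a * \<sigma> x)))"
    by (intro le_Limsup) auto
  also have "\<dots> \<le> ereal C" using HC L1 by blast
  finally show False by simp
qed

lemma L2:
  fixes \<sigma> :: "real \<Rightarrow> real"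
  assumes mono: "mono_on {0..} \<sigma>"
    and lim: "filterlim \<sigma> at_top at_top"
    and H: "a \<in> matset \<sigma>"
    and g: "\<gamma> > 0" and ga: "\<gamma> * a < 1"
  shows "P_prop \<sigma> \<gamma>"
proof -
  have a0: "a \<ge> 0" using L0[OF mono lim H] .
  obtain C where C: "C > 0" and HC: "\<forall>\<Lambda>>1. Limsup at_top (\<lambda>x. SUP l\<in>{1..\<Lambda>}. ereal (\<sigma> (l * x) / (l powr a * \<sigma> x))) \<le> ereal C"
    using H unfolding matset_def by blast
  define b where "b = 1 - \<gamma> * a"
  have b: "b > 0" using ga unfolding b_def by simp
  define K where "K = (2*C+2) powr (1/b)"
  have K1: "K > 1" unfolding K_def using C b by (intro gr_one_powr) auto
  have Kb: "K powr b = 2*C+2" unfolding K_def using b C by (simp add: powr_powr)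
  define \<Lambda> where "\<Lambda> = K powr \<gamma>"
  have L1: "\<Lambda> > 1" unfolding \<Lambda>_def using K1 g by (intro gr_one_powr) auto
  have La: "\<Lambda> powr a = K powr (\<gamma> * a)" unfolding \<Lambda>_def by (simp add: powr_powr)
  have "K = K powr (\<gamma> * a + b)" unfolding b_def using K1 by simp
  also have "\<dots> = K powr (\<gamma> * a) * (2*C+2)" by (simp add: powr_add Kb)
  finally have Klt: "K powr (\<gamma> * a) * (2*C) < K" using K1
    by (smt (verit, ccfv_SIG) powr_gt_zero mult_strict_left_mono)
  have "Limsup at_top (\<lambda>x. ereal (\<sigma> (\<Lambda> * x) / (\<Lambda> powr a * \<sigma> x)))
     \<le> Limsup at_top (\<lambda>x. SUP l\<in>{1..\<Lambda>}. ereal (\<sigma> (l * x) / (l powr a * \<sigma> x)))"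
    using L1 by (intro Limsup_mono always_eventually allI SUP_upper) auto
  also have "\<dots> \<le> ereal C" using HC L1 by blast
  also have "\<dots> < ereal (2*C)" using C by simp
  finally have "eventually (\<lambda>x. ereal (\<sigma> (\<Lambda> * x) / (\<Lambda> powr a * \<sigma> x)) < ereal (2*C)) at_top"
    by (rule Limsup_lessD)
  hence "eventually (\<lambda>x. ereal (\<sigma> (\<Lambda> * x) / \<sigma> x) \<le> ereal (K powr (\<gamma> * a) * (2*C))) at_top"
    using ev_pos[OF lim]
  proof eventually_elim
    case (elim x)
    have pos: "\<Lambda> powr a > 0" using L1 by simp
    have "\<sigma> (\<Lambda> * x) / (\<Lambda> powr a * \<sigma> x) < 2*C" using elim by simp
    hence "\<sigma> (\<Lambda> * x) < 2*C * (\<Lambda> powr a * \<sigma> x)" using elim pos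
      by (simp add: divide_less_eq)
    hence "\<sigma> (\<Lambda> * x) / \<sigma> x \<le> \<Lambda> powr a * (2*C)" using elim
      by (simp add: divide_le_eq algebra_simps)
    thus ?case by (simp add: La)
  qed
  hence "Limsup at_top (\<lambda>x. ereal (\<sigma> (\<Lambda> * x) / \<sigma> x)) \<le> ereal (K powr (\<gamma> * a) * (2*C))"
    by (rule Limsup_bounded)
  also have "\<dots> < ereal K" using Klt by simp
  finally show ?thesis unfolding P_prop_def \<Lambda>_def using K1 by blast
qed

lemma L1:
  fixes \<sigma> :: "real \<Rightarrow> real"
  assumes mono: "mono_on {0..} \<sigma>"
    and lim: "filterlim \<sigma> at_top at_top"
    and g: "\<gamma> > 0" and P: "P_prop \<sigma> \<gamma>"
  shows "\<exists>a. a < 1/\<gamma> \<and> a \<in> matset \<sigma>"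
proof -
  obtain K where K1: "K > 1" and HK: "Limsup at_top (\<lambda>t. ereal (\<sigma> (K powr \<gamma> * t) / \<sigma> t)) < ereal K"
    using P unfolding P_prop_def by blast
  obtain c where c1: "Limsup at_top (\<lambda>t. ereal (\<sigma> (K powr \<gamma> * t) / \<sigma> t)) < ereal c" and c2: "c < K"
    using ereal_dense2[OF HK] by auto
  define q where "q = max c ((1+K)/2)"
  have q1: "q > 1" and qK: "q < K" using K1 c2 unfolding q_def by (auto simp: less_max_iff_disj)
  define L where "L = K powr \<gamma>"
  have L1: "L > 1" unfolding L_def using K1 g by (intro gr_one_powr) auto
  have "eventually (\<lambda>t. ereal (\<sigma> (L * t) / \<sigma> t) < ereal c) at_top"
    using Limsup_lessD[OF c1] unfolding L_def .
  hence "eventually (\<lambda>t. t \<ge> 0 \<and> \<sigma> t > 0 \<and> \<sigma> (L * t) \<le> q * \<sigma> t) at_top"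
    using ev_pos[OF lim]
  proof eventually_elim
    case (elim t)
    hence "\<sigma> (L * t) / \<sigma> t \<le> q" unfolding q_def by auto
    thus ?case using elim by (simp add: divide_le_eq)
  qed
  then obtain x0 where x0: "\<And>t. t \<ge> x0 \<Longrightarrow> t \<ge> 0 \<and> \<sigma> t > 0 \<and> \<sigma> (L * t) \<le> q * \<sigma> t"
    unfolding eventually_at_top_linorder by blast
  have iter: "\<sigma> (L^n * t) \<le> q^n * \<sigma> t" if "t \<ge> x0" for n t
  proof (induction n)
    case 0 thus ?case by simp
  next
    case (Suc n)
    have t0: "t \<ge> 0" using x0[OF that] by simp
    have "1 \<le> L^n" using L1 by simp
    hence "t \<le> L^n * t" using t0 by (simp add: mult_le_cancel_right1)
    hence "L^n * t \<ge> x0" using that by simp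
    hence "\<sigma> (L * (L^n * t)) \<le> q * \<sigma> (L^n * t)" using x0 by blast
    also have "\<dots> \<le> q * (q^n * \<sigma> t)" using Suc q1 by (intro mult_left_mono) auto
    finally show ?case by (simp add: algebra_simps)
  qed
  define a where "a = ln q / ln L"
  have lnL: "ln L > 0" using L1 by simp
  have a0: "a \<ge> 0" unfolding a_def using q1 lnL by simp
  have aL: "a * ln L = ln q" unfolding a_def using lnL by simp
  have "ln L = \<gamma> * ln K" unfolding L_def using K1 by (simp add: ln_powr)
  hence "a = ln q / (\<gamma> * ln K)" unfolding a_def by simp
  also have "\<dots> < ln K / (\<gamma> * ln K)" using q1 qK K1 g
    by (intro divide_strict_right_mono) auto
  also have "\<dots> = 1/\<gamma>" using K1 by simp
  finally have a1: "a < 1/\<gamma>" .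
  have key: "\<sigma> (l * t) / (l powr a * \<sigma> t) \<le> q" if t: "t \<ge> x0" and l: "l \<ge> 1" for t l
  proof -
    have t0: "t \<ge> 0" and st: "\<sigma> t > 0" using x0[OF t] by auto
    define r where "r = ln l / ln L"
    have r0: "r \<ge> 0" unfolding r_def using l lnL by simp
    define n where "n = nat \<lfloor>r\<rfloor>"
    have n1: "real n \<le> r" unfolding n_def using r0 by linarith
    have n2: "r < real n + 1" unfolding n_def using r0 by linarith
    have "ln l < (real n + 1) * ln L" using n2 lnL unfolding r_def by (simp add: divide_less_eq)
    also have "\<dots> = ln (L^(n+1))" using L1 ln_realpow[of L "n+1"] by (simp del: power_Suc)
    finally have "l < L^(n+1)" using l L1 by simp
    hence "\<sigma> (l * t) \<le> \<sigma> (L^(n+1) * t)" using l t0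
      by (intro mono_onD[OF mono]) (auto intro: mult_right_mono)
    also have "\<dots> \<le> q^(n+1) * \<sigma> t" using iter[OF t] .
    finally have num: "\<sigma> (l * t) \<le> q^(n+1) * \<sigma> t" .
    have "real n * ln L \<le> ln l" using n1 lnL unfolding r_def by (simp add: le_divide_eq)
    hence "a * (real n * ln L) \<le> a * ln l" using a0 by (intro mult_left_mono)
    moreover have "a * (real n * ln L) = real n * ln q" using aL by (metis mult.left_commute)
    ultimately have "real n * ln q \<le> ln l * a" by (simp add: mult.commute)
    hence "exp (real n * ln q) \<le> exp (ln l * a)" by simp
    moreover have "exp (real n * ln q) = q^n" using q1 by (simp add: exp_of_nat_mult)
    moreover have "exp (ln l * a) = l powr a" using l by (simp add: powr_def)
    ultimately have den: "q^n \<le> l powr a" by simp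
    have "q^n * \<sigma> t \<le> l powr a * \<sigma> t" using den st by simp
    hence "\<sigma> (l * t) \<le> q * (l powr a * \<sigma> t)" using num q1
      by (smt (verit, ccfv_SIG) mult_left_mono power_Suc mult.assoc Suc_eq_plus1)
    moreover have "l powr a * \<sigma> t > 0" using l st by simp
    ultimately show ?thesis by (simp add: divide_le_eq)
  qed
  have Hq: "\<forall>\<Lambda>>1. Limsup at_top (\<lambda>x. SUP l\<in>{1..\<Lambda>}. ereal (\<sigma> (l * x) / (l powr a * \<sigma> x))) \<le> ereal q"
  proof (intro allI impI)
    fix \<Lambda> :: real
    have "eventually (\<lambda>x. x \<ge> x0) at_top" by (rule eventually_ge_at_top)
    hence "eventually (\<lambda>x. (SUP l\<in>{1..\<Lambda>}. ereal (\<sigma> (l * x) / (l powr a * \<sigma> x))) \<le> ereal q) at_top"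
      by eventually_elim (intro SUP_least, auto intro: key)
    thus "Limsup at_top (\<lambda>x. SUP l\<in>{1..\<Lambda>}. ereal (\<sigma> (l * x) / (l powr a * \<sigma> x))) \<le> ereal q"
      by (rule Limsup_bounded)
  qed
  have q0: "q > 0" using q1 by simp
  have "a \<in> matset \<sigma>" unfolding matset_def mem_Collect_eq using q0 Hq by (intro exI[of _ q] conjI)
  thus ?thesis using a1 by blast
qed

theorem lemma2p10:
  fixes \<sigma> :: "real \<Rightarrow> real"
  assumes nonneg: "\<forall>t\<ge>0. \<sigma> t \<ge> 0"
    and mono: "mono_on {0..} \<sigma>"
    and lim: "filterlim \<sigma> at_top at_top"
  shows "upper_matuszewska \<sigma> =
           (if gamma_index \<sigma> = 0 then \<infinity>
            else if gamma_index \<sigma> = \<infinity> then 0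
            else ereal (1 / real_of_ereal (gamma_index \<sigma>)))"
proof -
  define SA where "SA = matset \<sigma>"
  define SG where "SG = {\<gamma>. \<gamma> > 0 \<and> P_prop \<sigma> \<gamma>}"
  have UM: "upper_matuszewska \<sigma> = Inf (ereal ` SA)" unfolding upper_matuszewska_def SA_def matset_def ..
  have GI: "gamma_index \<sigma> = (if SG = {} then 0 else Sup (ereal ` SG))"
    unfolding gamma_index_def SG_def by auto
  have SA0: "a \<ge> 0" if "a \<in> SA" for a using L0[OF mono lim, of a] that unfolding SA_def by simp
  have SA1: "\<exists>a\<in>SA. a < 1/\<gamma>" if "\<gamma> \<in> SG" for \<gamma>
  proof -
    have "\<gamma> > 0" "P_prop \<sigma> \<gamma>" using that unfolding SG_def by auto
    from L1[OF mono lim this] show ?thesis unfolding SA_def by blast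
  qed
  have SG2: "\<gamma> \<in> SG" if "a \<in> SA" "\<gamma> > 0" "\<gamma> * a < 1" for a \<gamma>
    using L2[OF mono lim, of a \<gamma>] that unfolding SA_def SG_def by simp
  show ?thesis
  proof (cases "SG = {}")
    case True
    have "SA = {}"
    proof (rule ccontr)
      assume "SA \<noteq> {}"
      then obtain a where a: "a \<in> SA" by blast
      have "a \<ge> 0" using SA0[OF a] .
      hence "1/(a+1) * a < 1" by (simp add: field_simps)
      hence "1/(a+1) \<in> SG" using SG2[OF a] \<open>a \<ge> 0\<close> by simp
      thus False using True by simp
    qed
    thus ?thesis using True UM GI by (simp add: top_ereal_def)
  next
    case False
    define G where "G = Sup (ereal ` SG)"
    have GIG: "gamma_index \<sigma> = G" using GI False G_def by simp
    obtain \<gamma>0 where g0: "\<gamma>0 \<in> SG" using False by blast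
    have "ereal \<gamma>0 \<le> G" unfolding G_def using g0 by (intro SUP_upper)
    moreover have "\<gamma>0 > 0" using g0 unfolding SG_def by simp
    ultimately have Gpos: "G > 0" by (metis ereal_less(2) order_less_le_trans)
    have below: "Inf (ereal ` SA) < ereal r" if rp: "r > 0" "ereal (1/r) < G" for r
    proof -
      obtain \<gamma> where g: "\<gamma> \<in> SG" and lt: "ereal (1/r) < ereal \<gamma>"
        using rp(2) unfolding G_def by (auto simp: less_SUP_iff)
      obtain a where a: "a \<in> SA" and al: "a < 1/\<gamma>" using SA1[OF g] by blast
      have "1/r < \<gamma>" using lt by simp
      moreover have "\<gamma> > 0" using g unfolding SG_def by simp
      ultimately have "1/\<gamma> < r" using rp(1) by (simp add: field_simps)
      have "Inf (ereal ` SA) \<le> ereal a" using a by (intro INF_lower)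
      also have "\<dots> < ereal r" using al \<open>1/\<gamma> < r\<close> by simp
      finally show ?thesis .
    qed
    have nonneg_inf: "Inf (ereal ` SA) \<ge> 0" by (intro INF_greatest) (simp add: SA0)
    show ?thesis
    proof (cases "G = \<infinity>")
      case True
      have "Inf (ereal ` SA) \<le> 0"
      proof (rule ccontr)
        assume "\<not> Inf (ereal ` SA) \<le> 0"
        hence "0 < Inf (ereal ` SA)" by simp
        then obtain r where r: "0 < ereal r" "ereal r < Inf (ereal ` SA)" using ereal_dense2 by blast
        have "Inf (ereal ` SA) < ereal r" using r True by (intro below) auto
        thus False using r by simp
      qed
      thus ?thesis using nonneg_inf GIG True Gpos UM by auto
    next
      case Gfin: False
      obtain g where g: "G = ereal g" using Gfin Gpos by (cases G) auto
      have gpos: "g > 0" using Gpos g by simp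
      have le: "Inf (ereal ` SA) \<le> ereal (1/g)"
      proof (rule ccontr)
        assume "\<not> Inf (ereal ` SA) \<le> ereal (1/g)"
        hence "ereal (1/g) < Inf (ereal ` SA)" by simp
        then obtain r where r: "ereal (1/g) < ereal r" "ereal r < Inf (ereal ` SA)" using ereal_dense2 by blast
        have r1: "1/g < r" using r(1) by simp
        have "0 < 1/g" using gpos by simp
        hence rpos: "r > 0" using r1 by linarith
        have "1 < r * g" using r1 gpos by (simp add: divide_less_eq)
        hence "1/r < g" using rpos by (simp add: divide_less_eq mult.commute)
        hence "Inf (ereal ` SA) < ereal r" using rpos g by (intro below) auto
        thus False using r by simp
      qed
      have ge: "ereal (1/g) \<le> Inf (ereal ` SA)"
      proof (intro INF_greatest)
        fix a assume a: "a \<in> SA"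
        show "ereal (1/g) \<le> ereal a"
        proof (rule ccontr)
          assume "\<not> ereal (1/g) \<le> ereal a"
          hence alt: "a < 1/g" by simp
          have a0: "a \<ge> 0" using SA0[OF a] .
          obtain \<gamma> where gg: "\<gamma> > g" "\<gamma> * a < 1"
          proof (cases "a = 0")
            case True thus ?thesis using that[of "g+1"] by simp
          next
            case False
            hence "g < 1/a" using alt a0 gpos by (simp add: field_simps)
            then obtain \<gamma> where "g < \<gamma>" "\<gamma> < 1/a" using dense by blast
            thus ?thesis using that[of \<gamma>] False a0 by (simp add: field_simps)
          qed
          have "\<gamma> \<in> SG" using SG2[OF a] gg gpos by simp
          hence "ereal \<gamma> \<le> G" unfolding G_def by (intro SUP_upper)
          thus False using g gg by simp
        qed
      qed
      have "Inf (ereal ` SA) = ereal (1/g)" using le ge by (rule antisym)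
      thus ?thesis using GIG g gpos UM by simp
    qed
  qed
qed

end
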